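(* Let $0<H<1$, $1-H<\alpha<1$, and $z_1,z_2>0$. Put $$I=z_2^{2(H+\alpha-1)}+z_1^{2(H+\alpha-1)}+\frac{|z_2-z_1|^{2H}-z_1^{2H}-z_2^{2H}}{(z_1z_2)^{1-\alpha}}.$$ Then $I\le C(H,\alpha)|z_2-z_1|^{2(H+\alpha-1)}$, where $C(H,\alpha)$ depends only on $H$ and $\alpha$. *)

theory Defs
  imports Complex_Main
begin

end

theory Submission
  imports Defs
begin

lemma key:
  fixes H \<alpha> a b :: real
  assumes "0 < H" "H < 1" "1 - H < \<alpha>" "\<alpha> < 1" "0 < a" "a \<le> b"
  shows "b powr (2 * (H + \<alpha> - 1)) + a powr (2 * (H + \<alpha> - 1))
      + (\<bar>b - a\<bar> powr (2 * H) - a powr (2 * H) - b powr (2 * H)) / (a * b) powr (1 - \<alpha>)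
    \<le> 8 * \<bar>b - a\<bar> powr (2 * (H + \<alpha> - 1))"
proof -
  define \<beta> where "\<beta> = H + \<alpha> - 1"
  define \<gamma> where "\<gamma> = 1 - \<alpha>"
  have b0: "0 < \<beta>" "\<beta> < 1" and g0: "0 < \<gamma>" "\<gamma> < 1" using assms by (auto simp: \<beta>_def \<gamma>_def)
  have bpos: "0 < b" using assms by linarith
  define d where "d = b - a"
  have d0: "0 \<le> d" "d \<le> b" using assms by (auto simp: d_def)
  define p where "p = a powr \<gamma>"
  define q where "q = b powr \<gamma>"
  define A where "A = a powr (2*\<beta>)"
  define B where "B = b powr (2*\<beta>)"
  define D where "D = d powr (2*H)"
  have pp: "0 < p" "0 < q" "0 < A" "0 < B" using assms bpos by (auto simp: p_def q_def A_def B_def)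
  have pq: "p \<le> q" unfolding p_def q_def using assms g0 by (simp add: powr_mono2)
  have AB: "A \<le> B" unfolding A_def B_def using assms b0 by (simp add: powr_mono2)
  have H2: "2*H = 2*\<beta> + \<gamma> + \<gamma>" by (simp add: \<beta>_def \<gamma>_def)
  have aH: "a powr (2*H) = A * p * p" unfolding H2 A_def p_def by (simp only: powr_add mult.assoc)
  have bH: "b powr (2*H) = B * q * q" unfolding H2 B_def q_def by (simp only: powr_add mult.assoc)
  have ab: "(a*b) powr \<gamma> = p * q" unfolding p_def q_def using assms bpos by (simp add: powr_mult)
  have abs: "\<bar>b - a\<bar> = d" using d0 by (simp add: d_def)
  have LHS: "b powr (2 * (H + \<alpha> - 1)) + a powr (2 * (H + \<alpha> - 1))
      + (\<bar>b - a\<bar> powr (2 * H) - a powr (2 * H) - b powr (2 * H)) / (a * b) powr (1 - \<alpha>)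
     = B + A + (D - A*p*p - B*q*q) / (p*q)"
    using aH bH ab abs by (simp add: A_def B_def D_def \<beta>_def \<gamma>_def)
  have RHS: "8 * \<bar>b - a\<bar> powr (2 * (H + \<alpha> - 1)) = 8 * d powr (2*\<beta>)"
    using abs by (simp add: \<beta>_def)
  have smooth: "B + A - (A*p*p + B*q*q) / (p*q) \<le> 0"
  proof -
    have "(B + A) * (p*q) - (A*p*p + B*q*q) = (q - p) * (A*p - B*q)" by (simp add: algebra_simps)
    also have "\<dots> \<le> 0"
    proof (rule mult_nonneg_nonpos)
      show "0 \<le> q - p" using pq by simp
      have "A * p \<le> B * q" using AB pq pp by (intro mult_mono) auto
      then show "A*p - B*q \<le> 0" by simp
    qed
    finally have "(B + A) * (p*q) \<le> (A*p*p + B*q*q)" by simp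
    then have "B + A \<le> (A*p*p + B*q*q) / (p*q)" using pp by (simp add: pos_le_divide_eq)
    then show ?thesis by simp
  qed
  have split: "B + A + (D - A*p*p - B*q*q) / (p*q) = (B + A - (A*p*p + B*q*q) / (p*q)) + D/(p*q)"
    by (simp only: diff_divide_distrib add_divide_distrib)
  show ?thesis
  proof (cases "b \<le> 2*a")
    case True
    have Dd: "D = d powr (2*\<beta>) * (d powr \<gamma> * d powr \<gamma>)"
      unfolding D_def H2 by (simp only: powr_add mult.assoc)
    have dq: "d powr \<gamma> \<le> q" unfolding q_def using d0 g0 by (simp add: powr_mono2)
    have "q \<le> (2*a) powr \<gamma>" unfolding q_def using True bpos g0 by (simp add: powr_mono2)
    also have "\<dots> = 2 powr \<gamma> * p" unfolding p_def using assms by (simp add: powr_mult)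
    also have "\<dots> \<le> 2 * p"
    proof -
      have "2 powr \<gamma> \<le> 2 powr 1" using g0 by (intro powr_mono) auto
      then show ?thesis using pp by simp
    qed
    finally have q2: "q \<le> 2*p" .
    have "d powr \<gamma> * d powr \<gamma> \<le> q * q" using dq pp by (intro mult_mono) auto
    also have "\<dots> \<le> 2*p*q" using q2 pp by (simp add: mult_right_mono)
    finally have dd: "d powr \<gamma> * d powr \<gamma> \<le> 2*(p*q)" by simp
    have "D/(p*q) \<le> 2 * d powr (2*\<beta>)"
    proof -
      have "D \<le> d powr (2*\<beta>) * (2*(p*q))" unfolding Dd using dd by (intro mult_left_mono) auto
      then show ?thesis using pp by (simp add: divide_le_eq mult_ac)
    qed
    moreover have "0 \<le> d powr (2*\<beta>)" by simp
    ultimately show ?thesis using split smooth LHS RHS by linarith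
  next
    case False
    have "D \<le> b powr (2*H)" unfolding D_def using d0 assms by (simp add: powr_mono2)
    moreover have "0 \<le> A*p*p" using pp by simp
    ultimately have "D - A*p*p - B*q*q \<le> 0" using bH by linarith
    hence "(D - A*p*p - B*q*q) / (p*q) \<le> 0" using pp by (simp add: divide_nonpos_pos)
    moreover have "B \<le> 4 * d powr (2*\<beta>)"
    proof -
      have "b \<le> 2*d" using False by (simp add: d_def)
      hence "B \<le> (2*d) powr (2*\<beta>)" unfolding B_def using bpos b0 by (simp add: powr_mono2)
      also have "\<dots> = 2 powr (2*\<beta>) * d powr (2*\<beta>)" using d0 by (simp add: powr_mult)
      also have "\<dots> \<le> 4 * d powr (2*\<beta>)"
      proof -
        have "2 powr (2*\<beta>) \<le> 2 powr 2" using b0 by (intro powr_mono) auto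
        then show ?thesis by (intro mult_right_mono) auto
      qed
      finally show ?thesis .
    qed
    ultimately show ?thesis using AB LHS RHS by linarith
  qed
qed

theorem lemmaA1:
  fixes H \<alpha> :: real
  assumes "0 < H" "H < 1" "1 - H < \<alpha>" "\<alpha> < 1"
  shows "\<exists>C::real. \<forall>z1 z2::real. 0 < z1 \<longrightarrow> 0 < z2 \<longrightarrow>
    z2 powr (2 * (H + \<alpha> - 1)) + z1 powr (2 * (H + \<alpha> - 1))
      + (\<bar>z2 - z1\<bar> powr (2 * H) - z1 powr (2 * H) - z2 powr (2 * H)) / (z1 * z2) powr (1 - \<alpha>)
    \<le> C * \<bar>z2 - z1\<bar> powr (2 * (H + \<alpha> - 1))"
proof (intro exI allI impI)
  fix z1 z2 :: real
  assume z: "0 < z1" "0 < z2"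
  show "z2 powr (2 * (H + \<alpha> - 1)) + z1 powr (2 * (H + \<alpha> - 1))
      + (\<bar>z2 - z1\<bar> powr (2 * H) - z1 powr (2 * H) - z2 powr (2 * H)) / (z1 * z2) powr (1 - \<alpha>)
    \<le> 8 * \<bar>z2 - z1\<bar> powr (2 * (H + \<alpha> - 1))"
  proof (cases "z1 \<le> z2")
    case True
    then show ?thesis using key[OF assms z(1) True] by simp
  next
    case False
    have "z1 powr (2 * (H + \<alpha> - 1)) + z2 powr (2 * (H + \<alpha> - 1))
      + (\<bar>z1 - z2\<bar> powr (2 * H) - z2 powr (2 * H) - z1 powr (2 * H)) / (z2 * z1) powr (1 - \<alpha>)
    \<le> 8 * \<bar>z1 - z2\<bar> powr (2 * (H + \<alpha> - 1))"
      using key[OF assms z(2)] False by simp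
    then show ?thesis by (simp add: abs_minus_commute mult.commute add.commute add_ac diff_diff_eq)
  qed
qed

end
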